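(* Let $d\ge 1$ and $c\ge 1$, let $\mathcal C$ be a finite collection of $c$-fat objects in $\mathbb R^d$, let $G$ be the intersection graph of $\mathcal C$, and let $t\ge 0$ be an integer. Then $\hat\beta_t(G)\le C_d\cdot c\cdot (t+1)^{2d}$, where $C_d$ is a constant depending only on $d$ (i.e. $\hat\beta_t(G)=O(c\,t^{2d})$).
   Context: An object is a bounded subset of $\mathbb R^d$. The size of an object is the side length of its smallest enclosing axis-parallel hypercube; a box of size $r$ is an axis-parallel hypercube of side length $r$. A collection $\mathcal C$ of objects in $\mathbb R^d$ is $c$-fat (for $c\ge 1$) if for every $r\ge 0$ and every box $B$ of size $r$ there is a set of at most $c$ points of $\mathbb R^d$ such that every object of $\mathcal C$ of size at least $r$ that intersects $B$ contains at least one of these points. The intersection graph of $\mathcal C$ has vertex set $\mathcal C$, two objects being adjacent iff they intersect. For an integer $t\ge 0$, a graph $H$ is a $t$-shallow minor ($t$-minor) of a graph $G$ if there are pairwise disjoint sets $V_v\subseteq V(G)$, $v\in V(H)$, each inducing a connected subgraph of $G$ of radius at most $t$, such that $uv\in E(H)$ if and only if some edge of $G$ joins $V_u$ and $V_v$. For a graph $H$, $\beta(H)$ is the minimum number of cliques partitioning $V(H)$; for $x\in V(H)$, $H_x$ is the subgraph induced by the closed neighborhood $N_H[x]$; $\tilde\beta(H)=\min_{x\in V(H)}\beta(H_x)$; and $\hat\beta_t(G)=\max\{\tilde\beta(H): H \text{ a nonempty } t\text{-minor of } G\}$. *)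

theory Defs
  imports "HOL-Analysis.Analysis" "HOL-Library.Disjoint_Sets"
begin

definition cube :: "real^'d \<Rightarrow> real \<Rightarrow> (real^'d) set" where
  "cube a r = {x. \<forall>i. a$i \<le> x$i \<and> x$i \<le> a$i + r}"

definition obj_size :: "(real^'d) set \<Rightarrow> real" where
  "obj_size S = Inf {r. r \<ge> 0 \<and> (\<exists>a. S \<subseteq> cube a r)}"

(* the collection {obj v | v \<in> V} (indexed, duplicates allowed) is c-fat *)
definition fat :: "real \<Rightarrow> nat set \<Rightarrow> (nat \<Rightarrow> (real^'d) set) \<Rightarrow> bool" where
  "fat c V obj \<longleftrightarrow> (\<forall>r\<ge>0. \<forall>a. \<exists>P. finite P \<and> real (card P) \<le> c \<and>
      (\<forall>v\<in>V. obj_size (obj v) \<ge> r \<and> obj v \<inter> cube a r \<noteq> {} \<longrightarrow> obj v \<inter> P \<noteq> {}))"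

definition igraph :: "(nat \<Rightarrow> (real^'d) set) \<Rightarrow> nat \<Rightarrow> nat \<Rightarrow> bool" where
  "igraph obj u v \<longleftrightarrow> u \<noteq> v \<and> obj u \<inter> obj v \<noteq> {}"

definition walk_in :: "('a \<Rightarrow> 'a \<Rightarrow> bool) \<Rightarrow> 'a set \<Rightarrow> 'a list \<Rightarrow> bool" where
  "walk_in E X xs \<longleftrightarrow> xs \<noteq> [] \<and> set xs \<subseteq> X \<and> (\<forall>i. Suc i < length xs \<longrightarrow> E (xs!i) (xs!Suc i))"

definition conn_radius_le :: "('a \<Rightarrow> 'a \<Rightarrow> bool) \<Rightarrow> 'a set \<Rightarrow> nat \<Rightarrow> bool" where
  "conn_radius_le E X t \<longleftrightarrow> (\<exists>x\<in>X. \<forall>y\<in>X. \<exists>xs. walk_in E X xs \<and> hd xs = x \<and> last xs = y \<and> length xs \<le> t + 1)"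

(* A t-shallow minor of G = (V,E), represented canonically with the branch sets
   as its vertices: W is a family of pairwise disjoint branch sets *)
definition shallow_minor_model :: "nat \<Rightarrow> 'a set \<Rightarrow> ('a \<Rightarrow> 'a \<Rightarrow> bool) \<Rightarrow> 'a set set \<Rightarrow> bool" where
  "shallow_minor_model t V E W \<longleftrightarrow> (\<forall>X\<in>W. X \<subseteq> V \<and> conn_radius_le E X t) \<and>
      (\<forall>X\<in>W. \<forall>Y\<in>W. X \<noteq> Y \<longrightarrow> X \<inter> Y = {})"

definition minor_edge :: "('a \<Rightarrow> 'a \<Rightarrow> bool) \<Rightarrow> 'a set \<Rightarrow> 'a set \<Rightarrow> bool" where
  "minor_edge E X Y \<longleftrightarrow> X \<noteq> Y \<and> (\<exists>u\<in>X. \<exists>v\<in>Y. E u v)"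

definition is_clique :: "('b \<Rightarrow> 'b \<Rightarrow> bool) \<Rightarrow> 'b set \<Rightarrow> bool" where
  "is_clique F K \<longleftrightarrow> (\<forall>u\<in>K. \<forall>v\<in>K. u \<noteq> v \<longrightarrow> F u v)"

definition clique_cover_number :: "('b \<Rightarrow> 'b \<Rightarrow> bool) \<Rightarrow> 'b set \<Rightarrow> nat" where
  "clique_cover_number F S = (LEAST k. \<exists>P. partition_on S P \<and> finite P \<and> card P = k \<and> (\<forall>K\<in>P. is_clique F K))"

definition closed_nbhd :: "('b \<Rightarrow> 'b \<Rightarrow> bool) \<Rightarrow> 'b set \<Rightarrow> 'b \<Rightarrow> 'b set" where
  "closed_nbhd F S x = insert x {y\<in>S. F x y}"

definition tilde_beta :: "('b \<Rightarrow> 'b \<Rightarrow> bool) \<Rightarrow> 'b set \<Rightarrow> nat" where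
  "tilde_beta F S = Min ((\<lambda>x. clique_cover_number F (closed_nbhd F S x)) ` S)"

(* hat beta_t(G): max of tilde beta over nonempty t-shallow minors (0 if there are none) *)
definition hat_beta :: "nat \<Rightarrow> 'a set \<Rightarrow> ('a \<Rightarrow> 'a \<Rightarrow> bool) \<Rightarrow> nat" where
  "hat_beta t V E = Sup {tilde_beta (minor_edge E) W | W. shallow_minor_model t V E W \<and> W \<noteq> {}}"

end

theory Submission
  imports Defs
begin


definition cm :: "real^'d \<Rightarrow> real \<Rightarrow> real \<Rightarrow> (real^'d) set" where
  "cm a s \<delta> = {z. \<forall>i. a$i - \<delta> \<le> z$i \<and> z$i \<le> a$i + s + \<delta>}"

lemma cube_cm: "cube a s = cm a s 0"
  by (simp add: cube_def cm_def)

lemma cm_mono: "\<delta> \<le> \<delta>' \<Longrightarrow> cm a s \<delta> \<subseteq> cm a s \<delta>'"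
  unfolding cm_def by (auto; smt (verit))

lemma cm_step:
  assumes "T \<subseteq> cube b m" "T \<inter> cm a s \<delta> \<noteq> {}"
  shows "T \<subseteq> cm a s (\<delta> + m)"
proof
  fix y assume y: "y \<in> T"
  obtain z where z: "z \<in> T" "z \<in> cm a s \<delta>" using assms(2) by blast
  show "y \<in> cm a s (\<delta> + m)"
    unfolding cm_def
  proof (intro CollectI allI)
    fix i
    have "b$i \<le> y$i" "y$i \<le> b$i + m" "b$i \<le> z$i" "z$i \<le> b$i + m"
      using assms(1) y z(1) by (auto simp: cube_def)
    moreover have "a$i - \<delta> \<le> z$i" "z$i \<le> a$i + s + \<delta>" using z(2) by (auto simp: cm_def)
    ultimately show "a$i - (\<delta> + m) \<le> y$i \<and> y$i \<le> a$i + s + (\<delta> + m)" by linarith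
  qed
qed

lemma cube_mono: "r \<le> m \<Longrightarrow> cube b r \<subseteq> cube b m"
  unfolding cube_def by (auto; smt (verit))

lemma size_cube:
  fixes S :: "(real^'d) set"
  assumes "bounded S"
  shows "obj_size S \<ge> 0 \<and> (\<exists>a. S \<subseteq> cube a (obj_size S))"
proof (cases "S = {}")
  case True
  have "{r. r \<ge> 0 \<and> (\<exists>a. S \<subseteq> cube a r)} = {0..}" using True by auto
  then have "obj_size S = 0" unfolding obj_size_def by (simp add: cInf_atLeast)
  then show ?thesis using True by auto
next
  case False
  obtain B where B: "\<And>z. z \<in> S \<Longrightarrow> norm z \<le> B" using assms bounded_iff by blast
  have bb: "bdd_below ((\<lambda>z. z$i) ` S)" "bdd_above ((\<lambda>z. z$i) ` S)" for i
  proof -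
    have "\<bar>z$i\<bar> \<le> B" if "z \<in> S" for z using B[OF that] component_le_norm_cart[of z i] by linarith
    then show "bdd_below ((\<lambda>z. z$i) ` S)" "bdd_above ((\<lambda>z. z$i) ` S)"
      by (auto intro!: bdd_belowI[of _ "-B"] bdd_aboveI[of _ B] simp: abs_le_iff; smt (verit))+
  qed
  define lo :: "real^'d" where "lo = (\<chi> i. Inf ((\<lambda>z. z$i) ` S))"
  define hi :: "real^'d" where "hi = (\<chi> i. Sup ((\<lambda>z. z$i) ` S))"
  have lo: "lo$i \<le> z$i" and hi: "z$i \<le> hi$i" if "z \<in> S" for z i
    using that bb by (auto simp: lo_def hi_def intro: cInf_lower cSup_upper)
  define r0 where "r0 = Max (range (\<lambda>i. hi$i - lo$i))"
  have r0i: "hi$i - lo$i \<le> r0" for i unfolding r0_def by (rule Max_ge) auto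
  obtain z0 where z0: "z0 \<in> S" using False by blast
  have r0pos: "r0 \<ge> 0" using r0i[of undefined] lo[OF z0, of undefined] hi[OF z0, of undefined] by linarith
  have inS: "S \<subseteq> cube lo r0"
  proof
    fix z assume z: "z \<in> S"
    show "z \<in> cube lo r0" unfolding cube_def
      using lo[OF z] hi[OF z] r0i by (smt (verit) mem_Collect_eq)
  qed
  have lb: "r0 \<le> r" if "S \<subseteq> cube a r" for a r
  proof -
    have "r0 \<in> range (\<lambda>i. hi$i - lo$i)" unfolding r0_def by (rule Max_in) auto
    then obtain i where i: "r0 = hi$i - lo$i" by auto
    have "a$i \<le> lo$i"
      unfolding lo_def using False that
      by (auto simp: cube_def intro!: cInf_greatest)
    moreover have "hi$i \<le> a$i + r"
      unfolding hi_def using False that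
      by (auto simp: cube_def intro!: cSup_least)
    ultimately show ?thesis using i by linarith
  qed
  have "obj_size S = r0" unfolding obj_size_def
    by (rule cInf_eq_minimum) (use r0pos inS lb in auto)
  then show ?thesis using r0pos inS by auto
qed



lemma cover:
  fixes b z :: "real^'d"
  assumes m: "m \<ge> 0" and K: "K \<ge> 1" and z: "\<forall>i. b$i \<le> z$i \<and> z$i \<le> b$i + real K * m"
  shows "\<exists>k. (\<forall>i. k i < K) \<and> z \<in> cube (\<chi> i. b$i + real (k i) * m) m"
proof (cases "m = 0")
  case True
  then show ?thesis using z K by (intro exI[of _ "\<lambda>_. 0"]) (auto simp: cube_def)
next
  case False
  with m have mp: "m > 0" by simp
  define k where "k i = nat (min (int K - 1) \<lfloor>(z$i - b$i)/m\<rfloor>)" for i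
  have "k i < K \<and> b$i + real (k i) * m \<le> z$i \<and> z$i \<le> b$i + real (k i) * m + m" for i
  proof -
    define q where "q = (z$i - b$i)/m"
    have q0: "0 \<le> q" and qK: "q \<le> real K" using z mp by (auto simp: q_def field_simps)
    have zq: "z$i = b$i + q * m" using mp by (simp add: q_def)
    have f0: "0 \<le> \<lfloor>q\<rfloor>" using q0 by simp
    show ?thesis
    proof (cases "\<lfloor>q\<rfloor> \<le> int K - 1")
      case True
      then have ki: "real (k i) = of_int \<lfloor>q\<rfloor>" using f0 by (simp add: k_def q_def[symmetric])
      have "of_int \<lfloor>q\<rfloor> \<le> q" "q \<le> of_int \<lfloor>q\<rfloor> + 1" by linarith+
      then have "of_int \<lfloor>q\<rfloor> * m \<le> q * m" "q * m \<le> (of_int \<lfloor>q\<rfloor> + 1) * m"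
        using mp by (auto intro: mult_right_mono)
      moreover have "k i < K" using True f0 by (simp add: k_def q_def[symmetric]; linarith)
      ultimately show ?thesis using zq ki by (simp add: algebra_simps)
    next
      case False
      then have "q \<ge> real K" by linarith
      then have qe: "q = real K" using qK by simp
      have ki: "k i = K - 1" using False by (simp add: k_def q_def[symmetric])
      have "real (K - 1) = real K - 1" using K by simp
      then show ?thesis using zq qe ki K mp by (simp add: algebra_simps)
    qed
  qed
  then show ?thesis by (intro exI[of _ k]) (auto simp: cube_def)
qed

lemma successively_nth:
  "successively E xs \<longleftrightarrow> (\<forall>i. Suc i < length xs \<longrightarrow> E (xs!i) (xs!Suc i))"
proof (induction xs)
  case Nil then show ?case by simp
next
  case (Cons x xs)
  show ?case
  proof (cases xs)
    case Nil then show ?thesis by simp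
  next
    case (Cons y ys)
    have "(\<forall>i. Suc i < length (x#xs) \<longrightarrow> E ((x#xs)!i) ((x#xs)!Suc i)) \<longleftrightarrow>
          E x y \<and> (\<forall>i. Suc i < length xs \<longrightarrow> E (xs!i) (xs!Suc i))"
      using Cons by (auto simp: nth_Cons split: nat.splits)
    then show ?thesis using Cons.IH Cons by simp
  qed
qed

lemma walk_in_succ: "walk_in E X xs \<longleftrightarrow> xs \<noteq> [] \<and> set xs \<subseteq> X \<and> successively E xs"
  by (simp add: walk_in_def successively_nth)

lemma walk_big:
  assumes "successively (igraph obj) xs" "\<forall>u\<in>set xs. bounded (obj u)"
    "obj (hd xs) \<inter> cm a s \<delta> \<noteq> {}" "\<exists>w\<in>set xs. obj_size (obj w) \<ge> m" "m \<ge> 0"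
  shows "\<exists>w\<in>set xs. obj_size (obj w) \<ge> m \<and> obj w \<inter> cm a s (\<delta> + real (length xs - 1) * m) \<noteq> {}"
  using assms
proof (induction xs arbitrary: \<delta>)
  case Nil then show ?case by simp
next
  case (Cons x xs)
  show ?case
  proof (cases "obj_size (obj x) \<ge> m")
    case True
    have "cm a s \<delta> \<subseteq> cm a s (\<delta> + real (length (x#xs) - 1) * m)"
      using Cons.prems(5) by (intro cm_mono) simp
    then show ?thesis using True Cons.prems(3) by auto
  next
    case False
    then have xs: "xs \<noteq> []" using Cons.prems(4) by auto
    obtain b where b: "obj x \<subseteq> cube b (obj_size (obj x))" using size_cube[of "obj x"] Cons.prems(2) by auto
    have "obj x \<subseteq> cube b m" using b cube_mono[of "obj_size (obj x)" m b] False by auto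
    then have sub: "obj x \<subseteq> cm a s (\<delta> + m)" by (rule cm_step) (use Cons.prems(3) in simp)
    have e: "igraph obj x (hd xs)" and s: "successively (igraph obj) xs"
      using Cons.prems(1) xs by (auto simp: successively_Cons)
    have h: "obj (hd xs) \<inter> cm a s (\<delta> + m) \<noteq> {}" using e sub by (auto simp: igraph_def)
    have "\<forall>u\<in>set xs. bounded (obj u)" "\<exists>w\<in>set xs. obj_size (obj w) \<ge> m"
      using Cons.prems(2,4) False by auto
    then obtain w where w: "w \<in> set xs" "obj_size (obj w) \<ge> m"
      "obj w \<inter> cm a s (\<delta> + m + real (length xs - 1) * m) \<noteq> {}"
      using Cons.IH[OF s _ h _ Cons.prems(5)] by blast
    have eq: "\<delta> + m + real (length xs - 1) * m = \<delta> + real (length (x#xs) - 1) * m"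
      using xs by (cases xs) (auto simp: algebra_simps)
    have "obj w \<inter> cm a s (\<delta> + real (length (x#xs) - 1) * m) \<noteq> {}"
      using w(3) unfolding eq .
    then show ?thesis using w(1,2) by (meson list.set_intros(2))
  qed
qed

lemma walk_small:
  assumes "successively (igraph obj) xs" "\<forall>u\<in>set xs. bounded (obj u) \<and> obj_size (obj u) \<le> m"
    "obj (hd xs) \<subseteq> cm a s \<delta>" "m \<ge> 0" "xs \<noteq> []"
  shows "obj (last xs) \<subseteq> cm a s (\<delta> + real (length xs - 1) * m)"
  using assms
proof (induction xs arbitrary: \<delta>)
  case Nil then show ?case by simp
next
  case (Cons x xs)
  show ?case
  proof (cases "xs = []")
    case True then show ?thesis using Cons.prems by simp
  next
    case xs: False
    have hx: "hd xs \<in> set xs" using xs by simp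
    have hb: "bounded (obj (hd xs))" "obj_size (obj (hd xs)) \<le> m" using Cons.prems(2) hx by auto
    obtain b where b: "obj (hd xs) \<subseteq> cube b (obj_size (obj (hd xs)))"
      using size_cube[OF hb(1)] by blast
    have "obj (hd xs) \<subseteq> cube b m" using b cube_mono[OF hb(2), of b] by blast
    moreover have e: "igraph obj x (hd xs)" and s: "successively (igraph obj) xs"
      using Cons.prems(1) xs by (auto simp: successively_Cons)
    moreover have "obj (hd xs) \<inter> cm a s \<delta> \<noteq> {}" using e Cons.prems(3) by (auto simp: igraph_def)
    ultimately have "obj (hd xs) \<subseteq> cm a s (\<delta> + m)" by (intro cm_step)
    then have A: "obj (last xs) \<subseteq> cm a s (\<delta> + m + real (length xs - 1) * m)"
      using Cons.IH[OF s _ _ _ xs] Cons.prems(2,4) by (meson list.set_intros(2))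
    have eq: "\<delta> + m + real (length xs - 1) * m = \<delta> + real (length (x#xs) - 1) * m"
      using xs by (cases xs) (auto simp: algebra_simps)
    have "obj (last xs) \<subseteq> cm a s (\<delta> + real (length (x#xs) - 1) * m)"
      using A unfolding eq .
    then show ?thesis using xs by simp
  qed
qed



lemma cc_bound:
  assumes "g ` S \<subseteq> Q'" "finite Q'"
    "\<forall>y\<in>S. \<forall>y'\<in>S. g y = g y' \<longrightarrow> y \<noteq> y' \<longrightarrow> F y y'"
  shows "clique_cover_number F S \<le> card Q'"
proof -
  define P where "P = (\<lambda>q. {y\<in>S. g y = q}) ` (g ` S)"
  have fin: "finite (g ` S)" using assms(1,2) finite_subset by blast
  have part: "partition_on S P"
    unfolding partition_on_def disjoint_def P_def by auto
  have fP: "finite P" unfolding P_def using fin by simp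
  have cl: "\<forall>K\<in>P. is_clique F K" using assms(3) unfolding P_def is_clique_def by auto
  have "card P \<le> card (g ` S)" unfolding P_def by (rule card_image_le[OF fin])
  also have "\<dots> \<le> card Q'" by (rule card_mono[OF assms(2,1)])
  finally have cP: "card P \<le> card Q'" .
  have "clique_cover_number F S \<le> card P" unfolding clique_cover_number_def
    by (rule Least_le) (use part fP cl in blast)
  then show ?thesis using cP by simp
qed

lemma igraph_sym: "(\<lambda>x y. igraph obj y x) = igraph obj"
  by (auto simp: igraph_def fun_eq_iff)

lemma card_nat_floor: "real n \<le> c \<Longrightarrow> n \<le> nat \<lfloor>c\<rfloor>"
  by (metis le_nat_floor floor_of_nat nat_int floor_mono)



lemma neighbor_point:
  fixes obj :: "nat \<Rightarrow> (real^'d) set"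
  assumes bnd: "\<forall>v\<in>V. bounded (obj v)"
    and xV: "x \<subseteq> V" and YV: "Y \<subseteq> V"
    and cx: "conn_radius_le (igraph obj) x t" and cY: "conn_radius_le (igraph obj) Y t"
    and m0: "m \<ge> 0"
    and xs: "\<forall>u\<in>x. obj_size (obj u) \<le> m"
    and Ybig: "\<exists>w\<in>Y. obj_size (obj w) \<ge> m"
    and adj: "\<exists>u\<in>x. \<exists>v\<in>Y. igraph obj u v"
    and x0: "x0 \<in> x" "\<forall>y\<in>x. \<exists>xs. walk_in (igraph obj) x xs \<and> hd xs = x0 \<and> last xs = y \<and> length xs \<le> t + 1"
    and a0: "obj x0 \<subseteq> cube a0 m"
  shows "\<exists>w\<in>Y. obj_size (obj w) \<ge> m \<and> obj w \<inter> cm a0 m (3 * real t * m) \<noteq> {}"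
proof -
  let ?E = "igraph obj"
  have ux: "obj u \<subseteq> cm a0 m (real t * m)" if u: "u \<in> x" for u
  proof -
    obtain ws where ws: "walk_in ?E x ws" "hd ws = x0" "last ws = u" "length ws \<le> t + 1"
      using x0(2) u by blast
    have "obj (last ws) \<subseteq> cm a0 m (0 + real (length ws - 1) * m)"
    proof (rule walk_small)
      show "successively ?E ws" using ws(1) by (simp add: walk_in_succ)
      show "\<forall>u\<in>set ws. bounded (obj u) \<and> obj_size (obj u) \<le> m"
        using ws(1) xV bnd xs by (auto simp: walk_in_succ)
      show "obj (hd ws) \<subseteq> cm a0 m 0" using a0 ws(2) by (simp add: cube_cm)
      show "m \<ge> 0" by (rule m0)
      show "ws \<noteq> []" using ws(1) by (simp add: walk_in_succ)
    qed
    moreover have "cm a0 m (0 + real (length ws - 1) * m) \<subseteq> cm a0 m (real t * m)"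
      using ws(4) m0 by (intro cm_mono) (simp add: mult_right_mono)
    ultimately show ?thesis using ws(3) by blast
  qed
  obtain u v where uv: "u \<in> x" "v \<in> Y" "?E u v" using adj by blast
  have vA: "obj v \<inter> cm a0 m (real t * m) \<noteq> {}" using ux[OF uv(1)] uv(3) by (auto simp: igraph_def)
  obtain y0 where y0: "y0 \<in> Y" "\<forall>y\<in>Y. \<exists>xs. walk_in ?E Y xs \<and> hd xs = y0 \<and> last xs = y \<and> length xs \<le> t + 1"
    using cY unfolding conn_radius_le_def by blast
  obtain w where w: "w \<in> Y" "obj_size (obj w) \<ge> m" using Ybig by blast
  obtain ys1 where ys1: "walk_in ?E Y ys1" "hd ys1 = y0" "last ys1 = v" "length ys1 \<le> t + 1"
    using y0(2) uv(2) by blast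
  obtain ys2 where ys2: "walk_in ?E Y ys2" "hd ys2 = y0" "last ys2 = w" "length ys2 \<le> t + 1"
    using y0(2) w(1) by blast
  have ne1: "ys1 \<noteq> []" and ne2: "ys2 \<noteq> []" using ys1(1) ys2(1) by (auto simp: walk_in_succ)
  have s1: "successively ?E ys1" and s2: "successively ?E ys2" using ys1(1) ys2(1) by (auto simp: walk_in_succ)
  define zs where "zs = rev ys1 @ tl ys2"
  have ys2e: "ys2 = y0 # tl ys2" using ne2 ys2(2) by (metis list.collapse)
  have s2': "successively ?E (y0 # tl ys2)" using s2 ys2e by metis
  have sz: "successively ?E zs"
  proof -
    have "successively ?E (rev ys1)" using s1 by (simp only: successively_rev igraph_sym)
    moreover have "successively ?E (tl ys2)" using s2' by (auto simp: successively_Cons)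
    moreover have "tl ys2 = [] \<or> ?E (last (rev ys1)) (hd (tl ys2))"
      using s2' ys1(2) ne1 by (auto simp: successively_Cons last_rev)
    ultimately show ?thesis unfolding zs_def successively_append_iff by blast
  qed
  have setz: "set zs \<subseteq> Y" using ys1(1) ys2(1) by (auto simp: walk_in_succ zs_def dest: list.set_sel(2))
  have hdz: "hd zs = v" using ne1 ys1(3) by (simp add: zs_def hd_rev)
  have y0z: "y0 \<in> set zs" using ne1 ys1(2) hd_in_set[OF ne1] by (simp add: zs_def)
  have wz: "w \<in> set zs"
  proof -
    have "w \<in> set ys2" using ne2 ys2(3) by auto
    moreover have "set ys2 = insert y0 (set (tl ys2))" by (subst ys2e) simp
    ultimately have "w = y0 \<or> w \<in> set (tl ys2)" by blast
    then show ?thesis using y0z by (auto simp: zs_def)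
  qed
  have lz: "length zs - 1 \<le> 2 * t"
    using ys1(4) ys2(4) ne1 ne2 by (simp add: zs_def)
  have "\<exists>w\<in>set zs. obj_size (obj w) \<ge> m \<and> obj w \<inter> cm a0 m (real t * m + real (length zs - 1) * m) \<noteq> {}"
  proof (rule walk_big[OF sz])
    show "\<forall>u\<in>set zs. bounded (obj u)" using setz YV bnd by blast
    show "obj (hd zs) \<inter> cm a0 m (real t * m) \<noteq> {}" using hdz vA by simp
    show "\<exists>w\<in>set zs. m \<le> obj_size (obj w)" using wz w(2) by blast
    show "m \<ge> 0" by (rule m0)
  qed
  then obtain w' where w': "w' \<in> set zs" "obj_size (obj w') \<ge> m"
    "obj w' \<inter> cm a0 m (real t * m + real (length zs - 1) * m) \<noteq> {}" by blast
  have "real (length zs - 1) \<le> 2 * real t" using lz by linarith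
  then have "real (length zs - 1) * m \<le> (2 * real t) * m"
    using m0 by (rule mult_right_mono)
  then have "real t * m + real (length zs - 1) * m \<le> 3 * real t * m"
    by (simp add: algebra_simps)
  then have "cm a0 m (real t * m + real (length zs - 1) * m) \<subseteq> cm a0 m (3 * real t * m)"
    by (rule cm_mono)
  then show ?thesis using w' setz by blast
qed



lemma minor_bound:
  fixes obj :: "nat \<Rightarrow> (real^'d) set"
  assumes fV: "finite V" and bnd: "\<forall>v\<in>V. bounded (obj v)" and fat: "fat c V obj"
    and W: "shallow_minor_model t V (igraph obj) W" and Wne: "W \<noteq> {}"
  shows "tilde_beta (minor_edge (igraph obj)) W \<le> 1 + (6*t+1)^CARD('d) * nat \<lfloor>c\<rfloor>"
proof -
  let ?E = "igraph obj"
  let ?F = "minor_edge ?E"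
  have WV: "\<forall>X\<in>W. X \<subseteq> V \<and> conn_radius_le ?E X t" using W by (simp add: shallow_minor_model_def)
  have disj: "\<forall>X\<in>W. \<forall>Y\<in>W. X \<noteq> Y \<longrightarrow> X \<inter> Y = {}" using W by (simp add: shallow_minor_model_def)
  have fW: "finite W" using WV fV by (meson Pow_iff finite_Pow_iff finite_subset subsetI)
  define M where "M X = Max ((\<lambda>u. obj_size (obj u)) ` X)" for X
  have Xne: "X \<noteq> {}" "finite X" if "X \<in> W" for X
    using WV that fV finite_subset unfolding conn_radius_le_def by blast+
  have Mge: "obj_size (obj u) \<le> M X" if "X \<in> W" "u \<in> X" for X u
    unfolding M_def using Xne[OF that(1)] that(2) by (intro Max_ge) auto
  have Min: "\<exists>u\<in>X. obj_size (obj u) = M X" if "X \<in> W" for X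
  proof -
    have "M X \<in> (\<lambda>u. obj_size (obj u)) ` X" unfolding M_def using Xne[OF that] by (intro Max_in) auto
    then show ?thesis by auto
  qed
  have "Min (M ` W) \<in> M ` W" using fW Wne by (intro Min_in) auto
  then obtain x where x: "x \<in> W" "M x = Min (M ` W)" by (metis imageE)
  have xmin: "M x \<le> M Y" if "Y \<in> W" for Y using x(2) fW that by simp
  define m where "m = M x"
  obtain x0 where x0: "x0 \<in> x" "\<forall>y\<in>x. \<exists>xs. walk_in ?E x xs \<and> hd xs = x0 \<and> last xs = y \<and> length xs \<le> t + 1"
    using WV x(1) unfolding conn_radius_le_def by blast
  have bx0: "bounded (obj x0)" using bnd WV x(1) x0(1) by blast
  obtain a0 where a0': "obj x0 \<subseteq> cube a0 (obj_size (obj x0))" using size_cube[OF bx0] by blast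
  have m0: "m \<ge> 0" using size_cube[OF bx0] Mge[OF x(1) x0(1)] m_def by linarith
  have a0: "obj x0 \<subseteq> cube a0 m" using a0' cube_mono[OF Mge[OF x(1) x0(1)], of a0] m_def by blast
  define K where "K = 6*t+1"
  define b :: "real^'d" where "b = (\<chi> i. a0$i - 3 * real t * m)"
  define corner :: "('d \<Rightarrow> nat) \<Rightarrow> real^'d" where "corner k = (\<chi> i. b$i + real (k i) * m)" for k
  define Kset where "Kset = {k::'d \<Rightarrow> nat. \<forall>i. k i < K}"
  define Pf where "Pf k = (SOME P. finite P \<and> real (card P) \<le> c \<and>
      (\<forall>v\<in>V. obj_size (obj v) \<ge> m \<and> obj v \<inter> cube (corner k) m \<noteq> {} \<longrightarrow> obj v \<inter> P \<noteq> {}))" for k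
  have Pf: "finite (Pf k) \<and> real (card (Pf k)) \<le> c \<and>
      (\<forall>v\<in>V. obj_size (obj v) \<ge> m \<and> obj v \<inter> cube (corner k) m \<noteq> {} \<longrightarrow> obj v \<inter> Pf k \<noteq> {})" for k
    unfolding Pf_def by (rule someI_ex) (use fat m0 in \<open>simp add: fat_def\<close>)
  define Q where "Q = (\<Union>k\<in>Kset. Pf k)"
  have KsetE: "Kset = (\<Pi>\<^sub>E i\<in>UNIV. {..<K})" unfolding Kset_def by (auto simp: PiE_UNIV_domain)
  have cK: "card Kset = K ^ CARD('d)" unfolding KsetE by (simp add: card_PiE)
  have fK: "finite Kset" unfolding KsetE by (simp add: finite_PiE)
  have fQ: "finite Q" unfolding Q_def using fK Pf by blast
  have "card Q \<le> (\<Sum>k\<in>Kset. card (Pf k))" unfolding Q_def by (rule card_UN_le[OF fK])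
  also have "\<dots> \<le> card Kset * nat \<lfloor>c\<rfloor>"
  proof -
    have "card (Pf k) \<le> nat \<lfloor>c\<rfloor>" for k using Pf[of k] card_nat_floor by blast
    then show ?thesis using sum_bounded_above[of Kset "\<lambda>k. card (Pf k)" "nat \<lfloor>c\<rfloor>"] by simp
  qed
  finally have cQ: "card Q \<le> K ^ CARD('d) * nat \<lfloor>c\<rfloor>" using cK by simp
  have nb: "\<exists>p\<in>Q. \<exists>u\<in>Y. p \<in> obj u" if Y: "Y \<in> W" "?F x Y" for Y
  proof -
    have adj: "\<exists>u\<in>x. \<exists>v\<in>Y. ?E u v" using Y(2) by (simp add: minor_edge_def)
    obtain w where w: "w \<in> Y" "obj_size (obj w) = M Y" using Min[OF Y(1)] by blast
    have "\<exists>w\<in>Y. obj_size (obj w) \<ge> m \<and> obj w \<inter> cm a0 m (3 * real t * m) \<noteq> {}"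
    proof (rule neighbor_point[OF bnd])
      show "x \<subseteq> V" "conn_radius_le ?E x t" using WV x(1) by auto
      show "Y \<subseteq> V" "conn_radius_le ?E Y t" using WV Y(1) by auto
      show "m \<ge> 0" by (rule m0)
      show "\<forall>u\<in>x. obj_size (obj u) \<le> m" using Mge[OF x(1)] m_def by auto
      show "\<exists>w\<in>Y. obj_size (obj w) \<ge> m" using w xmin[OF Y(1)] m_def by (metis)
      show "\<exists>u\<in>x. \<exists>v\<in>Y. ?E u v" by (rule adj)
      show "x0 \<in> x" by (rule x0(1))
      show "\<forall>y\<in>x. \<exists>xs. walk_in ?E x xs \<and> hd xs = x0 \<and> last xs = y \<and> length xs \<le> t + 1" by (rule x0(2))
      show "obj x0 \<subseteq> cube a0 m" by (rule a0)
    qed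
    then obtain w' z where w': "w' \<in> Y" "obj_size (obj w') \<ge> m" "z \<in> obj w'" "z \<in> cm a0 m (3 * real t * m)"
      by blast
    have "\<forall>i. b$i \<le> z$i \<and> z$i \<le> b$i + real K * m"
      using w'(4) by (auto simp: cm_def b_def K_def algebra_simps)
    moreover have "K \<ge> 1" unfolding K_def by simp
    ultimately obtain k where k: "\<forall>i. k i < K" "z \<in> cube (corner k) m"
      using cover[OF m0, of K b z] unfolding corner_def by blast
    have "w' \<in> V" using WV Y(1) w'(1) by blast
    then have "obj w' \<inter> Pf k \<noteq> {}" using Pf[of k] w'(2,3) k(2) by blast
    moreover have "Pf k \<subseteq> Q" using k(1) unfolding Q_def Kset_def by blast
    ultimately show ?thesis using w'(1) by blast
  qed
  define f where "f Y = (SOME p. p \<in> Q \<and> (\<exists>u\<in>Y. p \<in> obj u))" for Y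
  define g where "g Y = (if Y = x then None else Some (f Y))" for Y
  let ?S = "closed_nbhd ?F W x"
  have fprop: "f Y \<in> Q \<and> (\<exists>u\<in>Y. f Y \<in> obj u)" if "Y \<in> ?S" "Y \<noteq> x" for Y
  proof -
    have "Y \<in> W" "?F x Y" using that unfolding closed_nbhd_def by auto
    then have "\<exists>p. p \<in> Q \<and> (\<exists>u\<in>Y. p \<in> obj u)" using nb by blast
    then show ?thesis unfolding f_def by (rule someI_ex)
  qed
  have "clique_cover_number ?F ?S \<le> card (insert None (Some ` Q))"
  proof (rule cc_bound)
    show "g ` ?S \<subseteq> insert None (Some ` Q)" using fprop unfolding g_def by auto
    show "finite (insert None (Some ` Q))" using fQ by simp
    show "\<forall>y\<in>?S. \<forall>y'\<in>?S. g y = g y' \<longrightarrow> y \<noteq> y' \<longrightarrow> ?F y y'"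
    proof (intro ballI impI)
      fix y y' assume yS: "y \<in> ?S" and y'S: "y' \<in> ?S" and gg: "g y = g y'" and ne: "y \<noteq> y'"
      have yx: "y \<noteq> x" and y'x: "y' \<noteq> x" using gg ne unfolding g_def by (auto split: if_splits)
      then have ff: "f y = f y'" using gg unfolding g_def by simp
      obtain u where u: "u \<in> y" "f y \<in> obj u" using fprop[OF yS yx] by blast
      obtain u' where u': "u' \<in> y'" "f y' \<in> obj u'" using fprop[OF y'S y'x] by blast
      have "y \<in> W" "y' \<in> W" using yS y'S x(1) unfolding closed_nbhd_def by auto
      then have "y \<inter> y' = {}" using disj ne by blast
      then have "u \<noteq> u'" using u(1) u'(1) by blast
      then have "?E u u'" using u(2) u'(2) ff by (auto simp: igraph_def)
      then show "?F y y'" using ne u(1) u'(1) by (auto simp: minor_edge_def)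
    qed
  qed
  also have "\<dots> \<le> Suc (card Q)" using fQ by (simp add: card_insert_if card_image)
  finally have ccb: "clique_cover_number ?F ?S \<le> Suc (card Q)" .
  have "tilde_beta ?F W \<le> clique_cover_number ?F ?S"
    unfolding tilde_beta_def using fW x(1) by (intro Min_le) auto
  then show ?thesis using ccb cQ K_def by simp
qed



theorem theorem3p1:
  "\<exists>Cd::real. \<forall>(V::nat set) (obj::nat \<Rightarrow> (real^'d) set) (c::real) (t::nat).
     finite V \<longrightarrow> c \<ge> 1 \<longrightarrow> (\<forall>v\<in>V. bounded (obj v)) \<longrightarrow> fat c V obj \<longrightarrow>
     real (hat_beta t V (igraph obj)) \<le> Cd * c * (real t + 1) ^ (2 * CARD('d))"
proof (intro exI allI impI)
  fix V :: "nat set" and obj :: "nat \<Rightarrow> (real^'d) set" and c :: real and t :: nat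
  assume fV: "finite V" and c1: "c \<ge> 1" and bnd: "\<forall>v\<in>V. bounded (obj v)" and fat: "fat c V obj"
  define d where "d = CARD('d)"
  define B where "B = 1 + (6*t+1)^d * nat \<lfloor>c\<rfloor>"
  have hb: "hat_beta t V (igraph obj) \<le> B"
  proof (cases "{tilde_beta (minor_edge (igraph obj)) W | W. shallow_minor_model t V (igraph obj) W \<and> W \<noteq> {}} = {}")
    case True then show ?thesis unfolding hat_beta_def by (simp only: Sup_nat_empty)
  next
    case False
    show ?thesis unfolding hat_beta_def
      by (rule cSup_least[OF False]) (use minor_bound[OF fV bnd fat] in \<open>auto simp: B_def d_def\<close>)
  qed
  have c0: "real (nat \<lfloor>c\<rfloor>) \<le> c" using c1 by linarith
  have tt: "(1::real) \<le> real t + 1" by simp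
  have p1: "(real (6*t+1))^d \<le> 7^d * (real t + 1)^d"
  proof -
    have "(real (6*t+1))^d \<le> (7 * (real t + 1))^d" by (rule power_mono) auto
    also have "(7 * (real t + 1))^d = 7^d * (real t + 1)^d" by (rule power_mult_distrib)
    finally show ?thesis .
  qed
  have p2: "(real t + 1)^d \<le> (real t + 1)^(2*d)" by (rule power_increasing) (use tt in auto)
  have p3: "1 \<le> (real t + 1)^(2*d)" using tt by (simp add: one_le_power)
  have "real B = 1 + (real (6*t+1))^d * real (nat \<lfloor>c\<rfloor>)" unfolding B_def by simp
  also have "\<dots> \<le> 1 + (7^d * (real t + 1)^(2*d)) * c"
  proof -
    have "(real (6*t+1))^d \<le> 7^d * (real t + 1)^(2*d)"
      using p1 p2 by (smt (verit) mult_left_mono zero_le_power)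
    then show ?thesis using c0 by (intro add_left_mono mult_mono) auto
  qed
  also have "\<dots> \<le> c * (real t + 1)^(2*d) + (7^d * (real t + 1)^(2*d)) * c"
  proof -
    have "1 * 1 \<le> c * (real t + 1)^(2*d)" using p3 c1 by (intro mult_mono) auto
    then show ?thesis by simp
  qed
  also have "\<dots> = (7^d + 1) * c * (real t + 1)^(2*d)" by (simp add: algebra_simps)
  finally have "real B \<le> (7^d + 1) * c * (real t + 1)^(2*d)" .
  then show "real (hat_beta t V (igraph obj)) \<le> (7^CARD('d) + 1) * c * (real t + 1) ^ (2 * CARD('d))"
  proof -
    have "real (hat_beta t V (igraph obj)) \<le> real B" using hb by simp
    then show ?thesis using \<open>real B \<le> _\<close> unfolding d_def by linarith
  qed
qed


end
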